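(* Let $w$ be a string of length $n$ and $i$ a position of $w$ with $i-\mu(i)\ge1$, $i+\mu(i)-1\le n$ and $\mu(i)>1$. Fix an integer $j$ with $i<j<i+\mu(i)$. Then for every $h$ with $i<h\le j$ and $\mu(h)>1$, we have $\mu(h)\le\max\{\mu(h') : i<h'\le j \text{ and } h'-\mu(h')<i\}$.
   Context: For a position $i\in\{1,\dots,n\}$ of $w$, the local period $\mu(i)$ is the least positive integer $\mu$ such that $w[j]=w[j+\mu]$ for all $j$ with $\max\{1,i-\mu\}\le j$ and $j+\mu\le\min\{n,i+\mu-1\}$. The maximum of the empty set is taken to be $-\infty$ (so the claim in particular asserts the set is nonempty whenever such an $h$ exists). *)

theory Defs
  imports Main
begin

(* Strings are lists; positions are 1-based: w[j] = w ! (j - 1). *)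
definition local_period :: "'a list \<Rightarrow> nat \<Rightarrow> nat" where
  "local_period w i = (LEAST \<mu>. 0 < \<mu> \<and>
     (\<forall>j::nat. max 1 (int i - int \<mu>) \<le> int j \<and> j + \<mu> \<le> min (length w) (i + \<mu> - 1)
        \<longrightarrow> w ! (j - 1) = w ! (j + \<mu> - 1)))"

end

theory Submission
  imports Defs "HOL-Library.List_Lexorder"
begin


definition lcons :: "'b list \<Rightarrow> nat \<Rightarrow> nat \<Rightarrow> bool" where
  "lcons y c r \<longleftrightarrow> (\<forall>k. c - r \<le> k \<and> k < c \<and> k + r < length y \<longrightarrow> y!k = y!(k+r))"

definition lper :: "'b list \<Rightarrow> nat \<Rightarrow> bool" where
  "lper y r \<longleftrightarrow> (\<forall>k. k + r < length y \<longrightarrow> y!k = y!(k+r))"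

lemma lex_cancel: "((u::'b::linorder list) @ t \<le> u @ s) = (t \<le> s)"
  by (induction u) auto

lemma lex_prefix_less: "s \<noteq> [] \<Longrightarrow> (v::'b::linorder list) < v @ s"
  by (induction v) (auto simp: neq_Nil_conv)

lemma both_le_prefix:
  "(t::int list) \<le> v \<Longrightarrow> map uminus t \<le> map uminus v \<Longrightarrow> \<exists>s. v = t @ s"
proof (induction t arbitrary: v)
  case Nil then show ?case by auto
next
  case (Cons a t)
  then obtain b v' where v: "v = b # v'" by (cases v) auto
  with Cons show ?case by auto
qed

lemma lcons_uminus: "lcons (map uminus (y::int list)) c m = lcons y c m"
  unfolding lcons_def by auto

lemma lper_uminus: "lper (map uminus (y::int list)) m = lper y m"
  unfolding lper_def by auto

lemma lper_lcons: "lper y m \<Longrightarrow> lcons y c m"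
  unfolding lper_def lcons_def by auto

lemma crit:
  fixes y :: "int list"
  assumes m1: "\<forall>d \<le> length y. drop d y \<le> drop c y"
    and m2: "\<forall>d \<le> length y. map uminus (drop d y) \<le> map uminus (drop c' y)"
    and cc: "c' \<le> c" and cl: "c \<le> length y" and r: "0 < r" and co: "lcons y c r"
  shows "lper y r"
proof -
  let ?N = "length y"
  have cok: "\<And>k. c - r \<le> k \<Longrightarrow> k < c \<Longrightarrow> k + r < ?N \<Longrightarrow> y!k = y!(k+r)"
    using co unfolding lcons_def by blast
  consider (A) "r \<le> c" "c + r \<le> ?N" | (B) "r \<le> c" "c + r > ?N"
    | (C) "r > c" "c + r \<le> ?N" | (D) "r > c" "c + r > ?N" by linarith
  then show ?thesis
  proof cases
    case A
    define z where "z = take r (drop c y)"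
    define t where "t = drop (c+r) y"
    have e1: "drop c y = z @ t" unfolding z_def t_def
      by (metis add.commute append_take_drop_id drop_drop)
    have e2: "drop (c-r) y = z @ drop c y"
    proof (rule nth_equalityI)
      show "length (drop (c - r) y) = length (z @ drop c y)"
        using A by (simp add: z_def)
      fix k assume k: "k < length (drop (c - r) y)"
      show "drop (c - r) y ! k = (z @ drop c y) ! k"
      proof (cases "k < r")
        case True
        have "y ! (c - r + k) = y ! (c - r + k + r)" using A True by (intro cok) auto
        then show ?thesis using A True by (simp add: z_def nth_append)
      next
        case False
        then show ?thesis using A k by (simp add: z_def nth_append)
      qed
    qed
    have "c - r \<le> length y" using cl by simp
    then have "z @ z @ t \<le> z @ t" using m1[rule_format, of "c-r"] e1 e2 by simp
    then have h1: "z @ t \<le> t" using lex_cancel[of z "z@t" t] by simp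
    have h2: "t \<le> z @ t" using m1[rule_format, of "c+r"] e1 A t_def by simp
    have "z @ t = t" using h1 h2 by simp
    then have "length z = 0" by (metis append_self_conv2 list.size(3))
    moreover have "length z = r" using A by (simp add: z_def)
    ultimately show ?thesis using r by simp
  next
    case B
    have e: "drop (c-r) y = drop c y @ drop (?N - r) y"
    proof (rule nth_equalityI)
      show "length (drop (c - r) y) = length (drop c y @ drop (?N - r) y)"
        using B cl by simp
      fix k assume k: "k < length (drop (c - r) y)"
      show "drop (c - r) y ! k = (drop c y @ drop (?N - r) y) ! k"
      proof (cases "k < ?N - c")
        case True
        have "y ! (c - r + k) = y ! (c - r + k + r)" using B True by (intro cok) auto
        then show ?thesis using B True by (simp add: nth_append)
      next
        case False
        then have "c + k - r = ?N - r + k - (?N - c)" using B cl by simp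
        then show ?thesis using B k False cl by (simp add: nth_append)
      qed
    qed
    have "drop (?N - r) y \<noteq> []" using B r cl by simp
    then have "drop c y < drop (c-r) y" using e lex_prefix_less by metis
    moreover have "drop (c-r) y \<le> drop c y" using m1 cl by simp
    ultimately show ?thesis by simp
  next
    case C
    define u1 where "u1 = drop c' (take c y)"
    define t where "t = drop (c+r) y"
    define v where "v = drop c y"
    have "drop c' y = drop c' (take c y @ drop c y)" by (simp only: append_take_drop_id)
    also have "\<dots> = u1 @ v" unfolding drop_append using cc cl by (simp add: u1_def v_def)
    finally have e1: "drop c' y = u1 @ v" .
    have e2: "drop (r+c') y = u1 @ t"
    proof (rule nth_equalityI)
      show "length (drop (r+c') y) = length (u1 @ t)"
        using C cc cl by (simp add: u1_def t_def)
      fix k assume k: "k < length (drop (r+c') y)"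
      show "drop (r+c') y ! k = (u1 @ t) ! k"
      proof (cases "k < c - c'")
        case True
        have "y ! (c' + k) = y ! (c' + k + r)" using C True by (intro cok) auto
        then show ?thesis using C True cc by (simp add: u1_def nth_append add.commute add.left_commute)
      next
        case False
        then show ?thesis using C k cc by (simp add: u1_def t_def nth_append add_ac)
      qed
    qed
    have "map uminus (u1 @ t) \<le> map uminus (u1 @ v)"
      using m2[rule_format, of "r+c'"] e1 e2 C cc by simp
    then have h1: "map uminus t \<le> map uminus v" using lex_cancel[of "map uminus u1"] by simp
    have h2: "t \<le> v" using m1[rule_format, of "c+r"] C unfolding t_def v_def by simp
    obtain s where vs: "v = t @ s" using both_le_prefix[OF h2 h1] by blast
    show ?thesis unfolding lper_def
    proof (intro allI impI)
      fix k assume k: "k + r < ?N"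
      show "y ! k = y ! (k + r)"
      proof (cases "k < c")
        case True then show ?thesis using C k by (intro cok) auto
      next
        case False
        have "k - c < length t" using k False by (simp add: t_def)
        then have "v ! (k - c) = t ! (k - c)" using vs by (simp add: nth_append)
        then show ?thesis using False k cl by (simp add: v_def t_def add.commute)
      qed
    qed
  next
    case D
    show ?thesis unfolding lper_def
    proof (intro allI impI)
      fix k assume k: "k + r < ?N"
      then show "y ! k = y ! (k + r)" using D by (intro cok) auto
    qed
  qed
qed

lemma maxidx_lt:
  fixes y :: "'b::linorder list"
  assumes p: "lper y q" and q: "0 < q" and cl: "c \<le> length y"
    and m: "\<forall>d \<le> length y. drop d y \<le> drop c y"
  shows "c < q"
proof (rule ccontr)
  assume "\<not> c < q"
  then have cq: "q \<le> c" by simp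
  let ?N = "length y"
  have e: "drop (c-q) y = drop c y @ drop (?N - q) y"
  proof (rule nth_equalityI)
    show "length (drop (c - q) y) = length (drop c y @ drop (?N - q) y)"
      using cq cl by simp
    fix k assume k: "k < length (drop (c - q) y)"
    show "drop (c - q) y ! k = (drop c y @ drop (?N - q) y) ! k"
    proof (cases "k < ?N - c")
      case True
      have "y ! (c - q + k) = y ! (c - q + k + q)" using p True cq cl unfolding lper_def by auto
      then show ?thesis using cq True cl by (simp add: nth_append)
    next
      case False
      then show ?thesis using cq k cl by (simp add: nth_append add.commute)
    qed
  qed
  have "drop (?N - q) y \<noteq> []" using cq cl q by simp
  then have "drop c y < drop (c-q) y" using e lex_prefix_less by metis
  moreover have "drop (c-q) y \<le> drop c y" using m cl by simp
  ultimately show False by simp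
qed

lemma ex_max_suffix:
  fixes y :: "'b::linorder list"
  shows "\<exists>c \<le> length y. \<forall>d \<le> length y. drop d y \<le> drop c y"
proof -
  let ?S = "(\<lambda>d. drop d y) ` {..length y}"
  have "Max ?S \<in> ?S" by (intro Max_in) auto
  then obtain c where c: "c \<le> length y" "Max ?S = drop c y" by (auto simp del: Max_in)
  have "\<forall>d \<le> length y. drop d y \<le> Max ?S" by (auto intro: Max_ge)
  with c show ?thesis by auto
qed

lemma core:
  fixes y :: "int list"
  assumes p: "lper y q" and q: "2 \<le> q"
    and nc: "\<forall>m. 0 < m \<and> m < q \<longrightarrow> \<not> lcons y q m"
  shows "\<exists>c. 0 < c \<and> c < q \<and> (\<forall>m. 0 < m \<and> m < q \<longrightarrow> \<not> lcons y c m)"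
proof -
  obtain c1 where c1: "c1 \<le> length y" "\<forall>d \<le> length y. drop d y \<le> drop c1 y"
    using ex_max_suffix by blast
  obtain c2 where c2: "c2 \<le> length (map uminus y)"
      "\<forall>d \<le> length (map uminus y). drop d (map uminus y) \<le> drop c2 (map uminus y)"
    using ex_max_suffix by blast
  have c2': "\<forall>d \<le> length y. map uminus (drop d y) \<le> map uminus (drop c2 y)"
    using c2 by (simp add: drop_map)
  have c1': "\<forall>d \<le> length (map uminus y). map uminus (drop d (map uminus y)) \<le> map uminus (drop c1 (map uminus y))"
    using c1 by (simp add: drop_map comp_def)
  have lt1: "c1 < q" using maxidx_lt[OF p _ c1] q by simp
  have lt2: "c2 < q" using maxidx_lt[OF _ _ c2] p q by (simp add: lper_uminus)
  define c where "c = max c1 c2"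
  have key: "\<And>m. 0 < m \<Longrightarrow> lcons y c m \<Longrightarrow> lper y m"
  proof -
    fix m assume m: "0 < m" "lcons y c m"
    show "lper y m"
    proof (cases "c2 \<le> c1")
      case True
      then show ?thesis using crit[OF c1(2) c2' True c1(1) m(1)] m c_def by (simp add: max_def)
    next
      case False
      have "lper (map uminus y) m"
        using crit[OF c2(2) c1' _ c2(1) m(1)] m False c_def by (simp add: max_def lcons_uminus)
      then show ?thesis by (simp add: lper_uminus)
    qed
  qed
  have "c > 0"
  proof (rule ccontr)
    assume "\<not> c > 0"
    then have "c = 0" by simp
    then have "lcons y c 1" unfolding lcons_def by simp
    then have "lper y 1" using key by simp
    then show False using nc lper_lcons q by fastforce
  qed
  moreover have "c < q" using lt1 lt2 c_def by simp
  moreover have "\<forall>m. 0 < m \<and> m < q \<longrightarrow> \<not> lcons y c m"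
    using key nc lper_lcons by blast
  ultimately show ?thesis by blast
qed


definition lp_ok :: "'a list \<Rightarrow> nat \<Rightarrow> nat \<Rightarrow> bool" where
  "lp_ok w i \<mu> \<longleftrightarrow> 0 < \<mu> \<and>
     (\<forall>j::nat. max 1 (int i - int \<mu>) \<le> int j \<and> j + \<mu> \<le> min (length w) (i + \<mu> - 1)
        \<longrightarrow> w ! (j - 1) = w ! (j + \<mu> - 1))"

lemma lp_eq: "local_period w i = (LEAST \<mu>. lp_ok w i \<mu>)"
  unfolding local_period_def lp_ok_def by simp

lemma lp_ex: "lp_ok w i (length w + 1)"
  unfolding lp_ok_def by auto

lemma lp_prop: "lp_ok w i (local_period w i)"
  unfolding lp_eq by (rule LeastI[of "lp_ok w i", OF lp_ex])

lemma lp_min: "lp_ok w i m \<Longrightarrow> local_period w i \<le> m"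
  unfolding lp_eq by (rule Least_le)

lemma lp_use:
  assumes "lp_ok w i m" "max 1 (int i - int m) \<le> int j" "j + m \<le> min (length w) (i + m - 1)"
  shows "w ! (j - 1) = w ! (j + m - 1)"
  using assms unfolding lp_ok_def by blast

lemma ar1: "(q::nat) + 1 \<le> h \<Longrightarrow> k < l \<Longrightarrow> l \<le> q \<Longrightarrow> l \<le> n - h + 1 \<Longrightarrow> h \<le> n \<Longrightarrow> (h-q+k) + q \<le> min n (h + q - 1)"
  by (simp add: min_def) linarith
lemma ar2: "h - m \<le> j \<Longrightarrow> 1 \<le> j \<Longrightarrow> j + m \<le> n \<Longrightarrow> j + m \<le> h + m - 1 \<Longrightarrow> 0 < m \<and> m < q \<Longrightarrow>
  ly = q + l \<Longrightarrow> l = min q (n - h + 1) \<Longrightarrow> (q::nat) + 1 \<le> h \<Longrightarrow> h \<le> n \<Longrightarrow> k = j + q - h \<Longrightarrow>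
  q - m \<le> k \<and> k < q \<and> k + m < ly"
  by (simp add: min_def) linarith
lemma ar3: "c - m \<le> k \<Longrightarrow> k < c \<Longrightarrow> k + m < q + l \<Longrightarrow> l \<le> q \<Longrightarrow> l \<le> n - h + 1 \<Longrightarrow> h \<le> n \<Longrightarrow> (q::nat) + 1 \<le> h \<Longrightarrow> c < q \<Longrightarrow> 0 < m \<Longrightarrow>
  (h-q+k) + m \<le> min n (h - q + c + m - 1)"
  by (simp add: min_def) linarith
lemma ar4: "h - m \<le> j \<Longrightarrow> 1 \<le> j \<Longrightarrow> j + m \<le> n \<Longrightarrow> j + m \<le> h + m - 1 \<Longrightarrow> 0 < m \<and> m < q \<Longrightarrow>
   (q::nat) + 1 \<le> h \<Longrightarrow> k = j + q - h \<Longrightarrow>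
  h-q-1+k = j - 1 \<and> h-q-1+(k+m) = j + m - 1 \<and> j - 1 < n \<and> j + m - 1 < n"
  by linarith

lemma Lstep:
  fixes w :: "'a list"
  assumes hn: "h \<le> length w" and q2: "2 \<le> local_period w h"
    and hq: "int h - int (local_period w h) \<ge> 1"
  shows "\<exists>g. h - local_period w h < g \<and> g < h \<and> local_period w h \<le> local_period w g"
proof -
  define q where "q = local_period w h"
  define n where "n = length w"
  define l where "l = min q (n - h + 1)"
  define f where "f = (\<lambda>a. int (LEAST k. k < length w \<and> w!k = a))"
  define y where "y = map f (take (q+l) (drop (h-q-1) w))"
  have qh: "q + 1 \<le> h" using hq q_def by simp
  have q2': "2 \<le> q" using q2 q_def by simp
  have hn': "h \<le> n" using hn n_def by simp
  have l1: "1 \<le> l" "l \<le> q" "l \<le> n - h + 1" using q2' hn' unfolding l_def by (simp_all add: min_def)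
  have ly: "length y = q + l" using qh l1 hn unfolding y_def n_def by auto
  have yk: "\<And>k. k < q + l \<Longrightarrow> y ! k = f (w ! (h-q-1+k))"
    using qh l1 hn unfolding y_def n_def by auto
  have finv: "\<And>a. a \<in> set w \<Longrightarrow> w ! nat (f a) = a"
  proof -
    fix a assume "a \<in> set w"
    then obtain k where k: "k < length w" "w!k = a" by (auto simp: in_set_conv_nth)
    have "(LEAST k. k < length w \<and> w!k = a) < length w \<and> w!(LEAST k. k < length w \<and> w!k = a) = a"
      by (rule LeastI[of "\<lambda>k. k < length w \<and> w!k = a" k]) (use k in simp)
    then show "w ! nat (f a) = a" unfolding f_def by simp
  qed
  have finj: "\<And>a b. a < n \<Longrightarrow> b < n \<Longrightarrow> f (w!a) = f (w!b) \<Longrightarrow> w!a = w!b"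
    by (metis finv n_def nth_mem)
  have okh: "lp_ok w h q" using lp_prop q_def by simp
  have per: "lper y q" unfolding lper_def
  proof (intro allI impI)
    fix k assume k: "k + q < length y"
    have kl: "k < l" using k ly by simp
    have a1: "int (h-q+k) = int h - int q + int k" using qh by (simp add: of_nat_diff)
    have a1': "max 1 (int h - int q) \<le> int (h-q+k)" using a1 qh by simp
    have a2: "(h-q+k) + q \<le> min (length w) (h + q - 1)" using ar1[OF qh kl l1(2) l1(3)] hn unfolding n_def by simp
    have X: "w ! ((h-q+k) - 1) = w ! ((h-q+k) + q - 1)"
      by (rule lp_use[OF okh a1' a2])
    have e: "(h-q+k) - 1 = h-q-1+k" "(h-q+k) + q - 1 = h-q-1+(k+q)" using qh by linarith+
    have eq: "w ! (h-q-1+k) = w ! (h-q-1+(k+q))" using X unfolding e .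
    have kk1: "k < q + l" "k + q < q + l" using k ly by linarith+
    show "y ! k = y ! (k + q)" by (simp only: yk[OF kk1(1)] yk[OF kk1(2)] eq)
  qed
  have nc: "\<forall>m. 0 < m \<and> m < q \<longrightarrow> \<not> lcons y q m"
  proof (intro allI impI notI)
    fix m assume m: "0 < m \<and> m < q" and co: "lcons y q m"
    have "lp_ok w h m" unfolding lp_ok_def
    proof (intro conjI allI impI)
      show "0 < m" using m by simp
      fix j assume j: "max 1 (int h - int m) \<le> int j \<and> j + m \<le> min (length w) (h + m - 1)"
      define k where "k = j + q - h"
      have j1: "h - m \<le> j" "1 \<le> j" "j + m \<le> length w" "j + m \<le> h + m - 1" using j by auto
      have j1': "h - m \<le> j" "1 \<le> j" "j + m \<le> n" "j + m \<le> h + m - 1" using j1 n_def by simp_all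
      have hn'': "h \<le> n" using hn n_def by simp
      have K: "q - m \<le> k \<and> k < q \<and> k + m < length y" by (rule ar2[OF j1' m ly l_def qh hn'' k_def])
      have k1: "q - m \<le> k" "k < q" "k + m < length y" using K by blast+
      have yy: "y ! k = y ! (k + m)" using co k1 unfolding lcons_def by blast
      have E: "h-q-1+k = j - 1 \<and> h-q-1+(k+m) = j + m - 1 \<and> j - 1 < n \<and> j + m - 1 < n"
        by (rule ar4[OF j1' m qh k_def])
      have kq1: "k < q + l" "k + m < q + l" using k1 ly by simp_all
      have "f (w ! (h-q-1+k)) = f (w ! (h-q-1+(k+m)))"
        using yy yk[OF kq1(1)] yk[OF kq1(2)] by simp
      then have "f (w ! (j - 1)) = f (w ! (j + m - 1))" using E by simp
      then show "w ! (j - 1) = w ! (j + m - 1)" using finj E by blast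
    qed
    then have "q \<le> m" using lp_min q_def by simp
    then show False using m by simp
  qed
  obtain c where c: "0 < c" "c < q" "\<forall>m. 0 < m \<and> m < q \<longrightarrow> \<not> lcons y c m"
    using core[OF per _ nc] q2 q_def by auto
  define g where "g = h - q + c"
  have "q \<le> local_period w g"
  proof (rule ccontr)
    assume "\<not> q \<le> local_period w g"
    then have mq: "local_period w g < q" by simp
    define m where "m = local_period w g"
    have okg: "lp_ok w g m" using lp_prop m_def by simp
    then have m0: "0 < m" unfolding lp_ok_def by simp
    have "lcons y c m" unfolding lcons_def
    proof (intro allI impI)
      fix k assume k: "c - m \<le> k \<and> k < c \<and> k + m < length y"
      have kk: "c - m \<le> k" "k < c" "k + m < q + l" using k ly by auto
      have a1: "int (h-q+k) = int h - int q + int k" using qh by (simp add: of_nat_diff)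
      have a0: "int g = int h - int q + int c" using qh c unfolding g_def by (simp add: of_nat_diff)
      have kc: "int c - int m \<le> int k" using kk by linarith
      have a1': "max 1 (int g - int m) \<le> int (h-q+k)" using a1 a0 kc qh by simp
      have a2: "(h-q+k) + m \<le> min (length w) (g + m - 1)" using ar3[OF kk l1(2) l1(3) hn[unfolded n_def[symmetric]] qh c(2) m0] unfolding n_def g_def by simp
      have "w ! ((h-q+k) - 1) = w ! ((h-q+k) + m - 1)"
        by (rule lp_use[OF okg a1' a2])
      moreover have "(h-q+k) - 1 = h-q-1+k" "(h-q+k) + m - 1 = h-q-1+(k+m)" using qh m0 by auto
      ultimately show "y ! k = y ! (k + m)" using yk k ly by simp
    qed
    then show False using c(3) m0 mq m_def by blast
  qed
  moreover have "h - q < g" "g < h" using c qh unfolding g_def by auto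
  ultimately show ?thesis using q_def by auto
qed

theorem lemma9:
  fixes w :: "'a list" and i j h :: nat
  assumes "1 \<le> i" and "i \<le> length w"
    and "int i - int (local_period w i) \<ge> 1"
    and "i + local_period w i - 1 \<le> length w"
    and "local_period w i > 1"
    and "i < j" and "j < i + local_period w i"
    and "i < h" and "h \<le> j" and "local_period w h > 1"
  shows "{h'. i < h' \<and> h' \<le> j \<and> int h' - int (local_period w h') < int i} \<noteq> {} \<and>
         local_period w h \<le> Max (local_period w ` {h'. i < h' \<and> h' \<le> j \<and> int h' - int (local_period w h') < int i})"
proof -
  define S where "S = {h'. i < h' \<and> h' \<le> j \<and> int h' - int (local_period w h') < int i}"
  have jn: "j \<le> length w" using assms by simp
  have step: "\<forall>h. i < h \<and> h \<le> j \<and> 1 < local_period w h \<longrightarrow> (\<exists>h'\<in>S. local_period w h \<le> local_period w h')"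
  proof (intro allI)
    fix h show "i < h \<and> h \<le> j \<and> 1 < local_period w h \<longrightarrow> (\<exists>h'\<in>S. local_period w h \<le> local_period w h')"
    proof (induction h rule: less_induct)
      case (less h)
      show ?case
      proof (intro impI)
        assume H: "i < h \<and> h \<le> j \<and> 1 < local_period w h"
        show "\<exists>h'\<in>S. local_period w h \<le> local_period w h'"
        proof (cases "int h - int (local_period w h) < int i")
          case True then show ?thesis using H unfolding S_def by auto
        next
          case False
          obtain g where g: "h - local_period w h < g" "g < h" "local_period w h \<le> local_period w g"
            using Lstep[of h w] H False jn assms(1) by auto
          have "i < g" using g False by linarith
          then obtain h' where "h' \<in> S" "local_period w g \<le> local_period w h'"
            using less.IH[of g] g H by auto
          then show ?thesis using g(3) le_trans by blast
        qed
      qed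
    qed
  qed
  obtain h' where h': "h' \<in> S" "local_period w h \<le> local_period w h'" using step assms by blast
  have fin: "finite S" unfolding S_def by (rule finite_subset[of _ "{..j}"]) auto
  have "local_period w h' \<le> Max (local_period w ` S)" using fin h' by (intro Max_ge) auto
  then show ?thesis using h' unfolding S_def[symmetric] by auto
qed

end
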